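(* Let $D$ be a document with phrase sequence $S_D=[s_1,\dots,s_n]$ and visual pattern function $p$. Let $GT=(V^*,E^* )$ be the true SHT of $D$; assume $GT$ is a candidate SHT whose root corresponds to $s_1$, and assume $GT$ is well-formatted. Assume further that the header-identification step is correct, i.e., the set of phrases retained after pruning clusters is exactly the set of phrases corresponding to the nodes of $GT$. Then the tree returned by \texttt{oracle\_gen}$(D)$ equals $GT$: it has the same node set and the same parent-child edges.
   Context: A document $D$ is represented by a sequence of phrases $S_D=[s_1,\dots,s_n]$ (maximal runs of consecutive words with identical font size, name, and type). Each phrase $s$ has a visual pattern $p(s)$, a vector of formatting features (font size, font name, font type, whether all-capitalized, whether it starts with a number, whether it starts with a letter, whether it is centered); two phrases have the same pattern iff these vectors are equal. A candidate SHT (semantic hierarchical tree) for $D$ is a single-rooted, ordered, connected directed tree $T=(V,E)$ in which each node $v$ corresponds to a distinct phrase $s_{ind(v)}\in S_D$ (its phrase index $ind(v)$), such that $ind(v)<ind(v')$ for every child $v'$ of $v$ and $ind(v)<ind(v')$ for every right sibling $v'$ of $v$ (so preorder traversal visits nodes in increasing phrase index). Write $p(v)=p(s_{ind(v)})$. For a node $v$ of a tree $T$, $next(v)$ is the phrase index of its immediate right sibling if it exists, otherwise that of the immediate right sibling of the closest ancestor having one; if no ancestor of $v$ has a right sibling, $next(v)=n$. The text span of $v$ is $ts(v)=[ind(v),\,next(v)-1]$ (a set of phrase indices). The granularity of $v$ is its depth (root has depth 1). Well-formatted: for a node $v$, the visual prefix $vispre(v)$ is the sequence of visual patterns of the nodes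 on the path from the root to $v$'s parent (e.g., a depth-3 node with ancestors of patterns $p_1,p_2$ has $vispre=p_1p_2$); for a set of nodes, $vispre$ is the set of their visual prefixes. For a pattern $q$, $pset(q)$ is the set of nodes $v$ with $p(v)=q$. An SHT is well-formatted if (1) any two sibling nodes have equal visual patterns, and (2) for every visual pattern $q$, all nodes in $pset(q)$ have the same visual prefix (i.e., $vispre(pset(q))$ is a single sequence). Procedure \texttt{oracle\_gen}$(D)$: (i) Cluster the phrases of $S_D$ by identical visual pattern; (ii) prune clusters deemed non-header (via an LLM oracle); the remaining phrases are the header phrases. (iii) Tree construction, top-down, one cluster at a time: start with the cluster containing $s_1$ (which, if it contains only $s_1$, yields the root node for $s_1$). Repeatedly pick the not-yet-processed cluster containing the phrase of smallest index. For each phrase $s_i$ in this cluster create a node $v_i$, and choose as its parent the node $v_j$ of the current partially constructed tree (before this cluster is added, with text spans computed in that tree) such that $ind(v_i)\in ts(v_j)$ and there is no other node $v_k$ with $ind(v_k)>ind(v_j)$ and $ind(v_i)\in ts(v_k)$ (the most specific containing node). All nodes of the cluster are then added simultaneously, ordered by phrase index. The output is the resulting tree. *)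

theory Defs
  imports Main
begin

(* Phrases are indexed 1..n; a tree on phrases is a pair (V, E) with
   V the set of phrase indices of its nodes and E the set of
   (parent, child) edges.  Children of a node are ordered by phrase index. *)

type_synonym ptree = "nat set \<times> (nat \<times> nat) set"

definition is_rooted_tree :: "nat set \<Rightarrow> (nat \<times> nat) set \<Rightarrow> nat \<Rightarrow> bool" where
  "is_rooted_tree V E r \<longleftrightarrow>
     finite V \<and> r \<in> V \<and> E \<subseteq> V \<times> V \<and>
     (\<forall>v\<in>V. (r, v) \<in> E\<^sup>*) \<and>
     (\<forall>v. (v, r) \<notin> E) \<and>
     (\<forall>v\<in>V - {r}. \<exists>!u. (u, v) \<in> E)"

definition candidate_SHT :: "nat \<Rightarrow> nat set \<Rightarrow> (nat \<times> nat) set \<Rightarrow> nat \<Rightarrow> bool" where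
  "candidate_SHT n V E r \<longleftrightarrow>
     V \<subseteq> {1..n} \<and> is_rooted_tree V E r \<and>
     (\<forall>(u, v)\<in>E. u < v) \<and>
     \<comment> \<open>preorder traversal visits nodes in increasing phrase index:
        every subtree occupies a contiguous block of node indices\<close>
     (\<forall>u\<in>V. \<forall>w\<in>V. \<forall>x\<in>V. (u, w) \<in> E\<^sup>* \<and> u \<le> x \<and> x \<le> w \<longrightarrow> (u, x) \<in> E\<^sup>*)"

(* visual prefix: patterns of the nodes on the root-to-parent path
   (ancestors are listed by increasing index, which is path order since parent < child) *)
definition vispre :: "(nat \<Rightarrow> 'q) \<Rightarrow> (nat \<times> nat) set \<Rightarrow> nat \<Rightarrow> 'q list" where
  "vispre p E v = map p (sorted_list_of_set {a. (a, v) \<in> E\<^sup>+})"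

definition well_formatted :: "(nat \<Rightarrow> 'q) \<Rightarrow> nat set \<Rightarrow> (nat \<times> nat) set \<Rightarrow> bool" where
  "well_formatted p V E \<longleftrightarrow>
     (\<forall>u a b. (u, a) \<in> E \<and> (u, b) \<in> E \<longrightarrow> p a = p b) \<and>
     (\<forall>a\<in>V. \<forall>b\<in>V. p a = p b \<longrightarrow> vispre p E a = vispre p E b)"

definition rsibs :: "nat set \<Rightarrow> (nat \<times> nat) set \<Rightarrow> nat \<Rightarrow> nat set" where
  "rsibs V E a = {b\<in>V. a < b \<and> (\<exists>u. (u, a) \<in> E \<and> (u, b) \<in> E)}"

definition imm_rsib :: "nat set \<Rightarrow> (nat \<times> nat) set \<Rightarrow> nat \<Rightarrow> nat" where
  "imm_rsib V E a = Min (rsibs V E a)"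

definition nxt :: "nat \<Rightarrow> nat set \<Rightarrow> (nat \<times> nat) set \<Rightarrow> nat \<Rightarrow> nat" where
  "nxt n V E v =
     (let A = {a\<in>V. (a, v) \<in> E\<^sup>* \<and> rsibs V E a \<noteq> {}}
      in if A = {} then n + 1 else imm_rsib V E (Max A))"

definition ts :: "nat \<Rightarrow> nat set \<Rightarrow> (nat \<times> nat) set \<Rightarrow> nat \<Rightarrow> nat set" where
  "ts n V E v = {v .. nxt n V E v - 1}"

(* most specific node of the current tree whose text span contains i *)
definition spec_parent :: "nat \<Rightarrow> nat set \<Rightarrow> (nat \<times> nat) set \<Rightarrow> nat \<Rightarrow> nat" where
  "spec_parent n V E i = Max {j\<in>V. i \<in> ts n V E j}"

(* one step of tree construction: R = not-yet-processed header phrases *)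
definition gen_step :: "nat \<Rightarrow> (nat \<Rightarrow> 'q) \<Rightarrow> nat set \<times> ptree \<Rightarrow> nat set \<times> ptree" where
  "gen_step n p st =
     (case st of (R, V, E) \<Rightarrow>
       if R = {} then (R, V, E) else
       (let m = Min R; C = {i\<in>R. p i = p m};
            E' = E \<union> {(spec_parent n V E i, i) | i. i \<in> C \<and> (\<exists>j\<in>V. i \<in> ts n V E j)}
        in (R - C, V \<union> C, E')))"

(* header phrases retained after pruning whole clusters; the LLM oracle
   is modelled as a predicate keep on visual patterns *)
definition header_phrases :: "nat \<Rightarrow> (nat \<Rightarrow> 'q) \<Rightarrow> ('q \<Rightarrow> bool) \<Rightarrow> nat set" where
  "header_phrases n p keep = {i\<in>{1..n}. keep (p i)}"

definition oracle_gen :: "nat \<Rightarrow> (nat \<Rightarrow> 'q) \<Rightarrow> ('q \<Rightarrow> bool) \<Rightarrow> ptree" where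
  "oracle_gen n p keep =
     (let H = header_phrases n p keep
      in snd (((gen_step n p) ^^ card H) (H, {}, {})))"

end

theory Submission imports Defs begin

locale sht =
  fixes n :: nat and p :: "nat \<Rightarrow> 'q" and Vs :: "nat set" and Es :: "(nat \<times> nat) set"
  assumes cand: "candidate_SHT n Vs Es 1" and wf: "well_formatted p Vs Es"
begin

lemma cand': "Vs \<subseteq> {1..n} \<and> finite Vs \<and> 1 \<in> Vs \<and> Es \<subseteq> Vs \<times> Vs \<and>
     (\<forall>v\<in>Vs. (1, v) \<in> Es\<^sup>*) \<and> (\<forall>v. (v, 1) \<notin> Es) \<and>
     (\<forall>v\<in>Vs - {1}. \<exists>!u. (u, v) \<in> Es) \<and> (\<forall>(u, v)\<in>Es. u < v) \<and>
     (\<forall>u\<in>Vs. \<forall>w\<in>Vs. \<forall>x\<in>Vs. (u, w) \<in> Es\<^sup>* \<and> u \<le> x \<and> x \<le> w \<longrightarrow> (u, x) \<in> Es\<^sup>*)"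
  using cand unfolding candidate_SHT_def is_rooted_tree_def by (elim conjE) (intro conjI; assumption)

lemma fin: "finite Vs" using cand' by (elim conjE) assumption
lemma root: "1 \<in> Vs" using cand' by (elim conjE) assumption
lemma sub: "Es \<subseteq> Vs \<times> Vs" using cand' by (elim conjE) assumption
lemma reach: "v \<in> Vs \<Longrightarrow> (1, v) \<in> Es\<^sup>*" using cand' by simp
lemma noin: "(v, 1) \<notin> Es" using cand' by simp
lemma uniq: "v \<in> Vs \<Longrightarrow> v \<noteq> 1 \<Longrightarrow> \<exists>!u. (u, v) \<in> Es"
proof -
  assume "v \<in> Vs" "v \<noteq> 1"
  then have "v \<in> Vs - {1}" by simp
  moreover have "\<forall>v\<in>Vs - {1}. \<exists>!u. (u, v) \<in> Es" using cand' by (elim conjE) assumption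
  ultimately show ?thesis by (rule bspec[rotated])
qed
lemma incr: "(u, v) \<in> Es \<Longrightarrow> u < v" using cand' by blast
lemma contig: "u \<in> Vs \<Longrightarrow> w \<in> Vs \<Longrightarrow> x \<in> Vs \<Longrightarrow> (u, w) \<in> Es\<^sup>* \<Longrightarrow> u \<le> x \<Longrightarrow> x \<le> w \<Longrightarrow> (u, x) \<in> Es\<^sup>*"
  using cand' by blast
lemma rng: "Vs \<subseteq> {1..n}" using cand' by (elim conjE) assumption

lemma sib: "(u, a) \<in> Es \<Longrightarrow> (u, b) \<in> Es \<Longrightarrow> p a = p b"
  using wf unfolding well_formatted_def by blast

lemma vp: "a \<in> Vs \<Longrightarrow> b \<in> Vs \<Longrightarrow> p a = p b \<Longrightarrow> vispre p Es a = vispre p Es b"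
  using wf unfolding well_formatted_def by blast

lemma tr_less: "(a, b) \<in> Es\<^sup>+ \<Longrightarrow> a < b"
  by (induction rule: trancl_induct) (auto dest: incr)

lemma rtr_le: "(a, b) \<in> Es\<^sup>* \<Longrightarrow> a \<le> b"
  by (metis rtranclD tr_less order.order_iff_strict)

lemma par_unique: "(u, v) \<in> Es \<Longrightarrow> (w, v) \<in> Es \<Longrightarrow> u = w"
  using sub noin uniq by blast

lemma anc: "(a, v) \<in> Es\<^sup>+ \<Longrightarrow> (w, v) \<in> Es \<Longrightarrow> (a, w) \<in> Es\<^sup>*"
  using tranclD2 par_unique by metis

lemma vispre_root: "vispre p Es 1 = []"
proof -
  have "{a. (a, 1) \<in> Es\<^sup>+} = {}" using noin by (auto dest: tranclD2)
  then show ?thesis unfolding vispre_def by simp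
qed

lemma vispre_nonroot:
  assumes "v \<in> Vs" "v \<noteq> 1"
  obtains u where "(u, v) \<in> Es" "vispre p Es v \<noteq> []" "last (vispre p Es v) = p u"
proof -
  obtain u where u: "(u, v) \<in> Es" using uniq assms by blast
  define S where "S = {a. (a, v) \<in> Es\<^sup>+}"
  have "S \<subseteq> Vs" unfolding S_def using sub by (auto dest!: tranclD)
  then have fS: "finite S" using fin finite_subset by blast
  have uS: "u \<in> S" unfolding S_def using u by blast
  have le: "a \<le> u" if "a \<in> S" for a using that anc[OF _ u] rtr_le unfolding S_def by blast
  define xs where "xs = sorted_list_of_set S"
  have sx: "sorted xs" "set xs = S" using fS unfolding xs_def by auto
  have ne: "xs \<noteq> []" using sx uS by auto
  have lS: "last xs \<in> S" using ne sx(2) last_in_set by blast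
  have ul: "u \<le> last xs"
  proof -
    have eq: "butlast xs @ [last xs] = xs" using ne by simp
    then have "sorted (butlast xs @ [last xs])" using sx(1) by simp
    then have all: "\<forall>x\<in>set (butlast xs). x \<le> last xs" by (simp add: sorted_append)
    have "u \<in> set (butlast xs @ [last xs])" using eq sx(2) uS by simp
    then have "u \<in> set (butlast xs) \<or> u = last xs" by auto
    then show ?thesis using all by auto
  qed
  have "last xs = u" using le[OF lS] ul by simp
  then show ?thesis using that[OF u] ne unfolding vispre_def S_def[symmetric] xs_def[symmetric]
    by (simp add: last_map)
qed

lemma same_pat_root: "a \<in> Vs \<Longrightarrow> p a = p 1 \<Longrightarrow> a = 1"
  using vp[OF _ root] vispre_root vispre_nonroot by metis

lemma same_pat_par:
  assumes "a \<in> Vs" "b \<in> Vs" "p a = p b" "(u, a) \<in> Es" "(w, b) \<in> Es"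
  shows "p u = p w"
proof -
  have "a \<noteq> 1" "b \<noteq> 1" using assms noin by auto
  then show ?thesis using vispre_nonroot assms vp par_unique by metis
qed


lemma anc_closed_rtr:
  assumes "\<forall>b\<in>V. \<forall>a. (a, b) \<in> Es \<longrightarrow> a \<in> V" "(a, b) \<in> Es\<^sup>*" "b \<in> V"
  shows "a \<in> V"
  using assms(2,3)
  by (induction rule: converse_rtrancl_induct) (use assms(1) in blast)+

lemma nxt_gt:
  assumes V: "V \<subseteq> Vs" and E: "E \<subseteq> Es" and iV: "i \<notin> V" and iVs: "i \<in> Vs"
    and ui: "(u, i) \<in> Es"
  shows "i < nxt n V E u"
proof -
  define A where "A = {a\<in>V. (a, u) \<in> E\<^sup>* \<and> rsibs V E a \<noteq> {}}"
  have fV: "finite V" using V fin finite_subset by blast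
  show ?thesis
  proof (cases "A = {}")
    case True
    then show ?thesis using rng iVs unfolding nxt_def A_def[symmetric] by auto
  next
    case False
    have fA: "finite A" using fV unfolding A_def by simp
    define a where "a = Max A"
    have aA: "a \<in> A" using Max_in[OF fA False] a_def by simp
    have rne: "rsibs V E a \<noteq> {}" and aV: "a \<in> V" and au: "(a, u) \<in> E\<^sup>*" using aA unfolding A_def by auto
    have fr: "finite (rsibs V E a)" using fV unfolding rsibs_def by simp
    define b where "b = Min (rsibs V E a)"
    have "b \<in> rsibs V E a" using Min_in[OF fr rne] b_def by simp
    then obtain w where bV: "b \<in> V" and ab: "a < b" and wa: "(w, a) \<in> E" and wb: "(w, b) \<in> E"
      unfolding rsibs_def by blast
    have auEs: "(a, u) \<in> Es\<^sup>*" using au rtrancl_mono[OF E] by blast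
    have ai: "(a, i) \<in> Es\<^sup>*" using auEs ui by simp
    have "i < b"
    proof (rule ccontr)
      assume "\<not> i < b"
      moreover have "b \<noteq> i" using bV iV by blast
      ultimately have "b \<le> i" by simp
      moreover have "a \<in> Vs" "b \<in> Vs" using aV bV V by auto
      ultimately have "(a, b) \<in> Es\<^sup>*" using contig[OF _ iVs _ ai, of b] ab by simp
      then have "(a, b) \<in> Es\<^sup>+" using ab by (auto simp: rtrancl_eq_or_trancl)
      then have "(a, w) \<in> Es\<^sup>*" using anc wb E by blast
      then have "(a, a) \<in> Es\<^sup>+" using wa E by auto
      then show False using tr_less by blast
    qed
    then show ?thesis unfolding nxt_def A_def[symmetric] Let_def imm_rsib_def
      using False a_def b_def by simp
  qed
qed

lemma spec_par:
  assumes V: "V \<subseteq> Vs" and E: "E \<subseteq> Es" and iV: "i \<notin> V" and iVs: "i \<in> Vs"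
    and ui: "(u, i) \<in> Es" and uV: "u \<in> V"
    and cl: "\<forall>b\<in>V. \<forall>a. (a, b) \<in> Es \<longrightarrow> a \<in> V"
    and noc: "\<forall>c. (u, c) \<in> Es \<longrightarrow> c \<notin> V"
  shows "spec_parent n V E i = u" "\<exists>j\<in>V. i \<in> ts n V E j"
proof -
  have fV: "finite V" using V fin finite_subset by blast
  have ult: "u < i" using incr ui by blast
  have nob: "\<not> (u < j \<and> j \<le> i)" if jV: "j \<in> V" for j
  proof
    assume h: "u < j \<and> j \<le> i"
    have "(u, j) \<in> Es\<^sup>*" using contig[of u i j] h uV jV V iVs ui by auto
    then have "(u, j) \<in> Es\<^sup>+" using h by (auto simp: rtrancl_eq_or_trancl)
    then obtain c where "(u, c) \<in> Es" "(c, j) \<in> Es\<^sup>*" by (auto dest: tranclD)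
    then show False using anc_closed_rtr[OF cl _ jV] noc by blast
  qed
  have its: "i \<in> ts n V E u" unfolding ts_def using nxt_gt[OF V E iV iVs ui] ult by auto
  then show "\<exists>j\<in>V. i \<in> ts n V E j" using uV by blast
  have "j \<le> u" if "j \<in> V" "i \<in> ts n V E j" for j
    using nob[OF that(1)] that(2) unfolding ts_def by auto
  then show "spec_parent n V E i = u" unfolding spec_parent_def
    using its uV fV by (intro Max_eqI) auto
qed

definition Inv :: "nat set \<times> ptree \<Rightarrow> bool" where
  "Inv st \<longleftrightarrow> (case st of (R, V, E) \<Rightarrow>
     V \<subseteq> Vs \<and> R = Vs - V \<and> E = {(a, b) \<in> Es. b \<in> V} \<and>
     (\<forall>b\<in>V. \<forall>a. (a, b) \<in> Es \<longrightarrow> a \<in> V) \<and>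
     (\<forall>a\<in>V. \<forall>b\<in>Vs. p a = p b \<longrightarrow> b \<in> V))"

lemma step_inv:
  assumes I: "Inv (R, V, E)" and Rne: "R \<noteq> {}"
  shows "Inv (gen_step n p (R, V, E)) \<and> card (fst (gen_step n p (R, V, E))) < card R"
proof -
  have I': "V \<subseteq> Vs \<and> R = Vs - V \<and> E = {(a, b) \<in> Es. b \<in> V} \<and>
     (\<forall>b\<in>V. \<forall>a. (a, b) \<in> Es \<longrightarrow> a \<in> V) \<and>
     (\<forall>a\<in>V. \<forall>b\<in>Vs. p a = p b \<longrightarrow> b \<in> V)"
    using I[unfolded Inv_def prod.case] .
  have V: "V \<subseteq> Vs" using I' by (elim conjE)
  have R: "R = Vs - V" using I' by (elim conjE)
  have Edef: "E = {(a, b) \<in> Es. b \<in> V}" using I' by (elim conjE)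
  have cl: "\<forall>b\<in>V. \<forall>a. (a, b) \<in> Es \<longrightarrow> a \<in> V" using I' by (elim conjE)
  have pc: "\<forall>a\<in>V. \<forall>b\<in>Vs. p a = p b \<longrightarrow> b \<in> V" using I' by (elim conjE)
  have E: "E \<subseteq> Es" using Edef by auto
  have fR: "finite R" using R fin by simp
  define m where "m = Min R"
  have mR: "m \<in> R" using Min_in[OF fR Rne] m_def by simp
  define C where "C = {i\<in>R. p i = p m}"
  define NE where "NE = {(spec_parent n V E i, i) | i. i \<in> C \<and> (\<exists>j\<in>V. i \<in> ts n V E j)}"
  have gs: "gen_step n p (R, V, E) = (R - C, V \<union> C, E \<union> NE)"
    unfolding gen_step_def NE_def C_def m_def using Rne by (simp add: Let_def)
  have mC: "m \<in> C" using mR C_def by simp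
  have CR: "C \<subseteq> R" using C_def by auto
  have NEeq: "NE = {(a, b) \<in> Es. b \<in> C}"
  proof (cases "m = 1")
    case True
    have C1: "C = {1}"
    proof
      show "C \<subseteq> {1}"
      proof
        fix i assume "i \<in> C"
        then have "i \<in> Vs" "p i = p 1" using R True unfolding C_def by auto
        then show "i \<in> {1}" using same_pat_root by blast
      qed
      show "{1} \<subseteq> C" using mC True by simp
    qed
    have "V = {}"
    proof (rule ccontr)
      assume "V \<noteq> {}"
      then obtain v where "v \<in> V" by blast
      then have "1 \<in> V" using anc_closed_rtr[OF cl reach] V by blast
      then show False using mR R True by blast
    qed
    then show ?thesis unfolding NE_def using C1 noin by auto
  next
    case False
    have mVs: "m \<in> Vs" using mR R by blast
    obtain pm where pm: "(pm, m) \<in> Es" using uniq[OF mVs False] by blast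
    have "pm < m" using incr pm by blast
    have "pm \<notin> R"
    proof
      assume "pm \<in> R"
      then have "m \<le> pm" using Min_le[OF fR] m_def by simp
      then show False using \<open>pm < m\<close> by simp
    qed
    moreover have "pm \<in> Vs" using pm sub by blast
    ultimately have pmV: "pm \<in> V" using R by blast
    have key: "(u, i) \<in> Es \<Longrightarrow> spec_parent n V E i = u \<and> (\<exists>j\<in>V. i \<in> ts n V E j)"
      if iC: "i \<in> C" for i u
    proof -
      assume ui: "(u, i) \<in> Es"
      have iRp: "i \<in> R \<and> p i = p m" using iC unfolding C_def by (rule CollectD)
      have "i \<in> Vs - V" using iRp R by simp
      then have iVs: "i \<in> Vs" and iV: "i \<notin> V" by simp_all
      have pup: "p u = p pm" using same_pat_par[OF iVs mVs _ ui pm] iRp by simp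
      have uVs: "u \<in> Vs" using sub ui by blast
      have uV: "u \<in> V" using bspec[OF bspec[OF pc pmV] uVs] pup by simp
      have noc: "\<forall>c. (u, c) \<in> Es \<longrightarrow> c \<notin> V"
      proof (intro allI impI notI)
        fix c assume "(u, c) \<in> Es" "c \<in> V"
        then have "p c = p i" using sib ui by blast
        then show False using pc \<open>c \<in> V\<close> iVs iV by blast
      qed
      show ?thesis using spec_par[OF V E iV iVs ui uV cl noc] by blast
    qed
    have hasp: "\<exists>u. (u, i) \<in> Es" if "i \<in> C" for i
    proof -
      have iVs: "i \<in> Vs" using that R C_def by auto
      have "i \<noteq> 1"
      proof
        assume "i = 1"
        then have "p m = p 1" using that C_def by simp
        then show False using same_pat_root mVs False by metis
      qed
      then show ?thesis using uniq iVs by blast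
    qed
    show ?thesis
    proof
      show "NE \<subseteq> {(a, b) \<in> Es. b \<in> C}"
      proof
        fix x assume "x \<in> NE"
        then obtain i where x: "x = (spec_parent n V E i, i)" and iC: "i \<in> C"
          unfolding NE_def by blast
        obtain u where ui: "(u, i) \<in> Es" using hasp[OF iC] by blast
        have "spec_parent n V E i = u" using key[OF iC ui] by blast
        then show "x \<in> {(a, b) \<in> Es. b \<in> C}" using x ui iC by simp
      qed
      show "{(a, b) \<in> Es. b \<in> C} \<subseteq> NE"
      proof clarify
        fix a b assume ab: "(a, b) \<in> Es" "b \<in> C"
        then show "(a, b) \<in> NE" unfolding NE_def using key[OF ab(2) ab(1)] by force
      qed
    qed
  qed
  have "Inv (R - C, V \<union> C, E \<union> NE)"
    unfolding Inv_def
  proof (simp only: prod.case, intro conjI)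
    show "V \<union> C \<subseteq> Vs" using V CR R by blast
    show "R - C = Vs - (V \<union> C)" using R by blast
    show "E \<union> NE = {(a, b) \<in> Es. b \<in> V \<union> C}" using Edef NEeq by blast
    show "\<forall>a\<in>V \<union> C. \<forall>b\<in>Vs. p a = p b \<longrightarrow> b \<in> V \<union> C"
      using pc R unfolding C_def by auto
    show "\<forall>b\<in>V \<union> C. \<forall>a. (a, b) \<in> Es \<longrightarrow> a \<in> V \<union> C"
    proof (intro ballI allI impI)
      fix b a assume b: "b \<in> V \<union> C" and ab: "(a, b) \<in> Es"
      show "a \<in> V \<union> C"
      proof (cases "b \<in> V")
        case True then show ?thesis using cl ab by blast
      next
        case False
        then have "b \<in> C" using b by blast
        then have "(a, b) \<in> NE" using NEeq ab by blast
        then obtain i where ai: "a = spec_parent n V E i" and ex: "\<exists>j\<in>V. i \<in> ts n V E j"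
          unfolding NE_def by blast
        have fV: "finite V" using finite_subset[OF V fin] .
        have f2: "finite {j\<in>V. i \<in> ts n V E j}" using fV by simp
        have ne2: "{j\<in>V. i \<in> ts n V E j} \<noteq> {}" using ex by blast
        have "a \<in> {j\<in>V. i \<in> ts n V E j}" unfolding ai spec_parent_def
          using Max_in[OF f2 ne2] .
        then show ?thesis by blast
      qed
    qed
  qed
  moreover have "card (R - C) < card R"
  proof (rule psubset_card_mono[OF fR])
    show "R - C \<subset> R" using mC CR by blast
  qed
  ultimately show ?thesis using gs by simp
qed

lemma Inv_iff: "Inv (R, V, E) \<longleftrightarrow> V \<subseteq> Vs \<and> R = Vs - V \<and> E = {(a, b) \<in> Es. b \<in> V} \<and>
     (\<forall>b\<in>V. \<forall>a. (a, b) \<in> Es \<longrightarrow> a \<in> V) \<and>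
     (\<forall>a\<in>V. \<forall>b\<in>Vs. p a = p b \<longrightarrow> b \<in> V)"
  unfolding Inv_def prod.case ..

lemma iter_inv:
  assumes "Inv st"
  shows "Inv (((gen_step n p) ^^ k) st) \<and>
         (fst (((gen_step n p) ^^ k) st) = {} \<or> card (fst (((gen_step n p) ^^ k) st)) + k \<le> card (fst st))"
proof (induction k)
  case 0 then show ?case using assms by simp
next
  case (Suc k)
  obtain R V E where st: "((gen_step n p) ^^ k) st = (R, V, E)" by (metis prod.exhaust)
  have st': "((gen_step n p) ^^ Suc k) st = gen_step n p (R, V, E)" using st by simp
  have IR: "Inv (R, V, E)" and cR: "R = {} \<or> card R + k \<le> card (fst st)"
    using Suc.IH unfolding st by simp_all
  show ?case
  proof (cases "R = {}")
    case True
    have "gen_step n p (R, V, E) = (R, V, E)" unfolding gen_step_def using True by simp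
    then show ?thesis using IR True st' by simp
  next
    case False
    define G where "G = gen_step n p (R, V, E)"
    have h: "Inv G" "card (fst G) < card R" using step_inv[OF IR False] unfolding G_def by simp_all
    have "card R + k \<le> card (fst st)" using cR False by simp
    then have "card (fst G) + Suc k \<le> card (fst st)" using h(2) by simp
    then show ?thesis using h(1) st' unfolding G_def by simp
  qed
qed

lemma final:
  "snd (((gen_step n p) ^^ card Vs) (Vs, {}, {})) = (Vs, Es)"
proof -
  have I0: "Inv (Vs, {}, {})" unfolding Inv_iff by simp
  obtain R V E where st: "((gen_step n p) ^^ card Vs) (Vs, {}, {}) = (R, V, E)" by (metis prod.exhaust)
  have I: "Inv (R, V, E)" and c: "R = {} \<or> card R + card Vs \<le> card Vs"
    using iter_inv[OF I0, of "card Vs"] unfolding st by simp_all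
  have I': "V \<subseteq> Vs \<and> R = Vs - V \<and> E = {(a, b) \<in> Es. b \<in> V}" using I unfolding Inv_iff by (elim conjE) (intro conjI)
  have "finite R" using I' fin by simp
  then have R0: "R = {}" using c by simp
  have VV: "V = Vs" using I' R0 by blast
  have "E = {(a, b) \<in> Es. b \<in> Vs}" using I' VV by simp
  also have "\<dots> = Es" using sub by blast
  finally show ?thesis using st VV by simp
qed

end

theorem theorem1:
  fixes n :: nat and p :: "nat \<Rightarrow> 'q" and keep :: "'q \<Rightarrow> bool"
    and Vs :: "nat set" and Es :: "(nat \<times> nat) set"
  assumes "candidate_SHT n Vs Es 1"
    and "well_formatted p Vs Es"
    and "header_phrases n p keep = Vs"
  shows "oracle_gen n p keep = (Vs, Es)"
proof -
  interpret sht n p Vs Es using assms(1,2) by unfold_locales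
  show ?thesis unfolding oracle_gen_def Let_def assms(3) using final .
qed

end
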